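(* Let $p$ be an admissible linear order on $\mathcal A$ and let $a,b\in L_e$ with $a<b$ such that no letter of $\mathcal A$ lies strictly between $a$ and $b$. For every word $w\in\mathcal A^n$, $$\rho\bigl(d_w(w_{a,b})\bigr)\le\rho(w_{a,b}).$$
   Context: Alphabet: $\mathcal A=L_e\sqcup L_o\sqcup G$ where $L_e=\{x_1,x_2,\dots\}$, $L_o=\{y_1,y_2,\dots\}$ are discrete and $G$ is identified with an interval of $\mathbb R$. An admissible order is a linear order $p$ on $\mathcal A$ for which $G$ is an interval and whose restriction to $G$ is the usual order of reals or its reverse. Generalised RSK (row insertion) w.r.t. $p$: to insert a letter $x$ into a tableau $T$: in the first row, if $x\in L_e$ find the leftmost entry strictly greater than $x$; if $x\in L_o\cup G$ find the leftmost entry greater than or equal to $x$; if there is none, append $x$ at the end of the row and stop; otherwise $x$ replaces that entry and the replaced entry is inserted into the second row by the same rule, and so on. For $w=z_1\cdots z_n$, $R(w)$ is obtained by inserting $z_1,\dots,z_n$ successively into the empty tableau. $w_{a,b}$ is the word obtained from $w$ by deleting all letters other than $a$ and $b$. The possible transformation $d_w(w_{a,b})$ is the word formed as follows: run the insertion of $z_1,\dots,z_n$ and write down the letters $a$ and $b$ in the order in which they are bumped out of the first row; then append the letters $a$, $b$ that remain in the first row of $R(w)$ at the end (in their order in that row). For a word $u$ in the letters $a,b$, its result $\rho(u)$ is the maximum, over all suffixes $u_k u_{k+1}\cdots u_N$ of $u=u_1\cdots u_N$ (including the empty suffix), of (number of $b$'s in the suffix) minus (number of $a$'s in the suffix). 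*)

theory Defs
  imports Complex_Main
begin

text \<open>Letters: LE n are the letters x_n of L_e, LO n the letters y_n of L_o,
  LG r the letters of G (identified with reals r in an interval Gs).\<close>
datatype letter = LE nat | LO nat | LG real

definition is_LE :: "letter \<Rightarrow> bool" where
  "is_LE c \<longleftrightarrow> (\<exists>n. c = LE n)"

definition alph :: "real set \<Rightarrow> letter set" where
  "alph Gs = range LE \<union> range LO \<union> LG ` Gs"

definition real_interval :: "real set \<Rightarrow> bool" where
  "real_interval S \<longleftrightarrow> (\<forall>x\<in>S. \<forall>z\<in>S. \<forall>y. x \<le> y \<and> y \<le> z \<longrightarrow> y \<in> S)"

text \<open>The order p, given by its (non-strict) comparison le.\<close>
definition lt :: "(letter \<Rightarrow> letter \<Rightarrow> bool) \<Rightarrow> letter \<Rightarrow> letter \<Rightarrow> bool" where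
  "lt le x y \<longleftrightarrow> le x y \<and> x \<noteq> y"

definition linear_on :: "letter set \<Rightarrow> (letter \<Rightarrow> letter \<Rightarrow> bool) \<Rightarrow> bool" where
  "linear_on A le \<longleftrightarrow>
     (\<forall>x\<in>A. le x x) \<and>
     (\<forall>x\<in>A. \<forall>y\<in>A. le x y \<and> le y x \<longrightarrow> x = y) \<and>
     (\<forall>x\<in>A. \<forall>y\<in>A. \<forall>z\<in>A. le x y \<and> le y z \<longrightarrow> le x z) \<and>
     (\<forall>x\<in>A. \<forall>y\<in>A. le x y \<or> le y x)"

definition admissible :: "real set \<Rightarrow> (letter \<Rightarrow> letter \<Rightarrow> bool) \<Rightarrow> bool" where
  "admissible Gs le \<longleftrightarrow>
     real_interval Gs \<and>
     linear_on (alph Gs) le \<and>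
     (\<forall>r\<in>Gs. \<forall>s\<in>Gs. \<forall>c\<in>alph Gs. le (LG r) c \<and> le c (LG s) \<longrightarrow> c \<in> LG ` Gs) \<and>
     ((\<forall>r\<in>Gs. \<forall>s\<in>Gs. le (LG r) (LG s) \<longleftrightarrow> r \<le> s) \<or>
      (\<forall>r\<in>Gs. \<forall>s\<in>Gs. le (LG r) (LG s) \<longleftrightarrow> s \<le> r))"

fun bump :: "(letter \<Rightarrow> letter \<Rightarrow> bool) \<Rightarrow> letter \<Rightarrow> letter list \<Rightarrow> letter list \<times> letter option" where
  "bump le x [] = ([x], None)"
| "bump le x (y # ys) =
     (if (if is_LE x then lt le x y else le x y) then (x # ys, Some y)
      else (let (r, z) = bump le x ys in (y # r, z)))"

fun ins :: "(letter \<Rightarrow> letter \<Rightarrow> bool) \<Rightarrow> letter \<Rightarrow> letter list list \<Rightarrow> letter list list" where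
  "ins le x [] = [[x]]"
| "ins le x (r # rs) =
     (case bump le x r of
        (r', None) \<Rightarrow> r' # rs
      | (r', Some y) \<Rightarrow> r' # ins le y rs)"

definition rsk :: "(letter \<Rightarrow> letter \<Rightarrow> bool) \<Rightarrow> letter list \<Rightarrow> letter list list" where
  "rsk le w = fold (ins le) w []"

fun first_row_bumps :: "(letter \<Rightarrow> letter \<Rightarrow> bool) \<Rightarrow> letter list \<Rightarrow> letter list list \<Rightarrow> letter list" where
  "first_row_bumps le [] T = []"
| "first_row_bumps le (x # xs) T =
     (case T of [] \<Rightarrow> []
      | r # _ \<Rightarrow> (case snd (bump le x r) of None \<Rightarrow> [] | Some y \<Rightarrow> [y]))
     @ first_row_bumps le xs (ins le x T)"

definition first_row :: "letter list list \<Rightarrow> letter list" where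
  "first_row T = (case T of [] \<Rightarrow> [] | r # _ \<Rightarrow> r)"

definition restr :: "letter \<Rightarrow> letter \<Rightarrow> letter list \<Rightarrow> letter list" where
  "restr a b w = filter (\<lambda>c. c = a \<or> c = b) w"

definition dw :: "(letter \<Rightarrow> letter \<Rightarrow> bool) \<Rightarrow> letter \<Rightarrow> letter \<Rightarrow> letter list \<Rightarrow> letter list" where
  "dw le a b w = restr a b (first_row_bumps le w []) @ restr a b (first_row (rsk le w))"

definition cnt :: "letter \<Rightarrow> letter list \<Rightarrow> int" where
  "cnt c u = int (length (filter (\<lambda>d. d = c) u))"

definition rho :: "letter \<Rightarrow> letter \<Rightarrow> letter list \<Rightarrow> int" where
  "rho a b u = Max ((\<lambda>k. cnt b (drop k u) - cnt a (drop k u)) ` {0..length u})"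

end

theory Submission imports Defs begin

definition cnd where "cnd le x y = (if is_LE x then lt le x y else le x y)"

lemma bump_Cons_fst: "fst (bump le x (y#ys)) = (if cnd le x y then x#ys else y # fst (bump le x ys))"
  by (simp add: cnd_def split_beta)
lemma bump_Cons_snd: "snd (bump le x (y#ys)) = (if cnd le x y then Some y else snd (bump le x ys))"
  by (simp add: cnd_def split_beta)
lemma bump_Nil: "fst (bump le x []) = [x]" "snd (bump le x []) = None" by simp_all

definition optl where "optl z = (case z of None \<Rightarrow> [] | Some y \<Rightarrow> [y])"

fun rb where "rb le [] r = []" | "rb le (x#xs) r = optl (snd (bump le x r)) @ rb le xs (fst (bump le x r))"

definition rowins where "rowins le x r = fst (bump le x r)"

lemma fr_ins: "first_row (ins le x T) = fst (bump le x (first_row T))"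
  by (cases T) (auto simp: first_row_def split: option.splits prod.splits)

lemma frb: "first_row_bumps le xs T = rb le xs (first_row T)"
proof (induction xs arbitrary: T)
  case Nil then show ?case by simp
next
  case (Cons x xs)
  show ?case using Cons fr_ins[of le x T]
    by (cases T) (auto simp: first_row_def optl_def split: option.splits)
qed

lemma frfold: "first_row (fold (ins le) w T) = fold (rowins le) w (first_row T)"
  by (induction w arbitrary: T) (simp_all add: fr_ins rowins_def)

lemma cnt_app[simp]: "cnt c (u @ v) = cnt c u + cnt c v" by (simp add: cnt_def)
lemma cnt_Cons: "cnt c (x # v) = (if x = c then 1 else 0) + cnt c v" by (simp add: cnt_def)
lemma cnt_Nil[simp]: "cnt c [] = 0" by (simp add: cnt_def)

lemma rho_Nil[simp]: "rho a b [] = 0" by (simp add: rho_def)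

lemma rho_Cons: "rho a b (c#u) = max (cnt b (c#u) - cnt a (c#u)) (rho a b u)"
proof -
  have "{0..length (c#u)} = insert 0 (Suc ` {0..length u})"
    by (simp add: atLeast0AtMost atMost_Suc_eq_insert_0)
  then have "(\<lambda>k. cnt b (drop k (c#u)) - cnt a (drop k (c#u))) ` {0..length (c#u)}
     = insert (cnt b (c#u) - cnt a (c#u)) ((\<lambda>k. cnt b (drop k u) - cnt a (drop k u)) ` {0..length u})"
    by (simp only: image_insert image_image drop_Suc_Cons drop_0)
  then show ?thesis unfolding rho_def
    by (simp only: Max_insert finite_imageI finite_atLeastAtMost) (auto)
qed

lemma rho_snoc: "rho a b (u @ [c]) = max 0 (rho a b u + (cnt b [c] - cnt a [c]))"
proof (induction u)
  case Nil then show ?case by (simp add: rho_Cons)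
next
  case (Cons d u)
  show ?case using Cons by (simp add: rho_Cons cnt_Cons)
qed

lemma rho_ge0: "0 \<le> rho a b u"
  by (induction u) (auto simp: rho_Cons)

fun good :: "(letter\<Rightarrow>letter\<Rightarrow>bool) \<Rightarrow> letter \<Rightarrow> letter \<Rightarrow> letter list \<Rightarrow> bool" where
  "good le a b [] = True"
| "good le a b (c # r) = (good le a b r \<and> (c = b \<longrightarrow> a \<notin> set r) \<and> (lt le b c \<longrightarrow> a \<notin> set r \<and> b \<notin> set r))"

definition restr1 where "restr1 a b w = restr a b w"

declare bump.simps[simp del]
declare bump_Nil[simp]

lemma set_bump: "set (fst (bump le x r)) \<subseteq> insert x (set r)"
  by (induction r) (auto simp: bump_Cons_fst)

lemma restr_simps[simp]: "restr a b [] = []" "restr a b (u @ v) = restr a b u @ restr a b v"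
  "restr a b (c # u) = (if c = a \<or> c = b then c # restr a b u else restr a b u)"
  by (simp_all add: restr_def)

locale ab =
  fixes A le a b
  assumes lin: "linear_on A le" and aA: "a \<in> A" and bA: "b \<in> A"
    and aLE: "is_LE a" and bLE: "is_LE b" and ab: "lt le a b"
    and adj: "\<forall>c\<in>A. \<not> (lt le a c \<and> lt le c b)"
begin

lemma refl: "x \<in> A \<Longrightarrow> le x x" using lin unfolding linear_on_def by blast
lemma antis: "x \<in> A \<Longrightarrow> y \<in> A \<Longrightarrow> le x y \<Longrightarrow> le y x \<Longrightarrow> x = y" using lin unfolding linear_on_def by blast
lemma trans: "x \<in> A \<Longrightarrow> y \<in> A \<Longrightarrow> z \<in> A \<Longrightarrow> le x y \<Longrightarrow> le y z \<Longrightarrow> le x z"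
proof -
  assume h: "x \<in> A" "y \<in> A" "z \<in> A" "le x y" "le y z"
  have "\<forall>x\<in>A. \<forall>y\<in>A. \<forall>z\<in>A. le x y \<and> le y z \<longrightarrow> le x z" using lin unfolding linear_on_def by blast
  then show ?thesis using h by blast
qed
lemma total: "x \<in> A \<Longrightarrow> y \<in> A \<Longrightarrow> le x y \<or> le y x" using lin unfolding linear_on_def by blast

lemma le_lt: "x \<in> A \<Longrightarrow> y \<in> A \<Longrightarrow> z \<in> A \<Longrightarrow> le x y \<Longrightarrow> lt le y z \<Longrightarrow> lt le x z"
proof -
  assume h: "x \<in> A" "y \<in> A" "z \<in> A" "le x y" "lt le y z"
  have "le x z" using trans[of x y z] h by (simp add: lt_def)
  moreover have "x \<noteq> z" using antis[of y z] h by (auto simp: lt_def)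
  ultimately show ?thesis by (simp add: lt_def)
qed
lemma lt_le: "x \<in> A \<Longrightarrow> y \<in> A \<Longrightarrow> z \<in> A \<Longrightarrow> lt le x y \<Longrightarrow> le y z \<Longrightarrow> lt le x z"
proof -
  assume h: "x \<in> A" "y \<in> A" "z \<in> A" "lt le x y" "le y z"
  have "le x z" using trans[of x y z] h by (simp add: lt_def)
  moreover have "x \<noteq> z" using antis[of x y] h by (auto simp: lt_def)
  ultimately show ?thesis by (simp add: lt_def)
qed

lemma anb: "a \<noteq> b" using ab by (simp add: lt_def)
lemma nba: "\<not> lt le b a" using ab aA bA antis[of a b] by (auto simp: lt_def)
lemma irr: "\<not> lt le x x" by (simp add: lt_def)

lemma lt_trans: "x \<in> A \<Longrightarrow> y \<in> A \<Longrightarrow> z \<in> A \<Longrightarrow> lt le x y \<Longrightarrow> lt le y z \<Longrightarrow> lt le x z"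
  using lt_le[of x y z] by (simp add: lt_def)

lemma trich: "x \<in> A \<Longrightarrow> x \<noteq> a \<Longrightarrow> x \<noteq> b \<Longrightarrow> lt le x a \<or> lt le b x"
proof -
  assume x: "x \<in> A" "x \<noteq> a" "x \<noteq> b"
  show ?thesis
  proof (cases "le x a")
    case True then show ?thesis using x by (simp add: lt_def)
  next
    case False
    then have "lt le a x" using total[of x a] x aA by (simp add: lt_def)
    then have "\<not> lt le x b" using adj x by blast
    then have "le b x" using total[of x b] x bA by (auto simp: lt_def)
    then show ?thesis using x by (simp add: lt_def)
  qed
qed

lemma cond_low: "x \<in> A \<Longrightarrow> lt le x a \<Longrightarrow> cnd le x a \<and> cnd le x b"
proof -
  assume x: "x \<in> A" "lt le x a"
  have "lt le x b" using lt_trans[of x a b] x ab aA bA by blast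
  then show ?thesis using x unfolding cnd_def lt_def by simp
qed

lemma cond_high: "x \<in> A \<Longrightarrow> lt le b x \<Longrightarrow> \<not> cnd le x a \<and> \<not> cnd le x b"
proof -
  assume x: "x \<in> A" "lt le b x"
  have 1: "\<not> le x a" using lt_le[of b x a] x aA bA nba by blast
  have 2: "\<not> le x b" using lt_le[of b x b] x bA irr by blast
  show ?thesis using 1 2 unfolding cnd_def lt_def by simp
qed

lemma cond_a: "cnd le a y = lt le a y" using aLE by (simp add: cnd_def)
lemma cond_b: "cnd le b y = lt le b y" using bLE by (simp add: cnd_def)

lemma good_bump: "good le a b r \<Longrightarrow> set r \<subseteq> A \<Longrightarrow> x \<in> A \<Longrightarrow> good le a b (fst (bump le x r))"
proof (induction r)
  case Nil then show ?case by simp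
next
  case (Cons y ys)
  show ?case
  proof (cases "cnd le x y")
    case True
    have "x = b \<longrightarrow> a \<notin> set ys" using True Cons.prems by (auto simp: cond_b)
    moreover have "lt le b x \<longrightarrow> a \<notin> set ys \<and> b \<notin> set ys"
    proof
      assume h: "lt le b x"
      have "lt le b y" using True h Cons.prems lt_trans[of b x y] lt_le[of b x y] bA
        by (auto simp: cnd_def split: if_splits)
      then show "a \<notin> set ys \<and> b \<notin> set ys" using Cons.prems by simp
    qed
    ultimately show ?thesis using True Cons.prems by (simp add: bump_Cons_fst)
  next
    case False
    have g: "good le a b (fst (bump le x ys))" using Cons by simp
    have s: "set (fst (bump le x ys)) \<subseteq> insert x (set ys)" by (rule set_bump)
    have "y = b \<Longrightarrow> x \<noteq> a" using False ab by (auto simp: cond_a)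
    moreover have "lt le b y \<Longrightarrow> x \<noteq> a \<and> x \<noteq> b" using False ab aA bA Cons.prems lt_trans[of a b y]
      by (auto simp: cond_a cond_b)
    ultimately show ?thesis using False g s Cons.prems by (auto simp: bump_Cons_fst)
  qed
qed

lemma restr_none: "a \<notin> set l \<Longrightarrow> b \<notin> set l \<Longrightarrow> restr a b l = []"
  by (induction l) auto

lemma no_bump: "\<not> cnd le x a \<Longrightarrow> \<not> cnd le x b \<Longrightarrow> x \<noteq> a \<Longrightarrow> x \<noteq> b \<Longrightarrow>
   restr a b (fst (bump le x r)) = restr a b r \<and> restr a b (optl (snd (bump le x r))) = []"
proof (induction r)
  case Nil then show ?case by (simp add: optl_def)
next
  case (Cons y ys)
  show ?case
  proof (cases "cnd le x y")
    case True
    then have "y \<noteq> a" "y \<noteq> b" using Cons.prems by auto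
    then show ?thesis using True Cons.prems by (simp add: bump_Cons_fst bump_Cons_snd optl_def)
  next
    case False
    then show ?thesis using Cons by (simp add: bump_Cons_fst bump_Cons_snd)
  qed
qed

lemma bump_other: "x \<in> A \<Longrightarrow> x \<noteq> a \<Longrightarrow> x \<noteq> b \<Longrightarrow>
   (restr a b (fst (bump le x r)) = restr a b r \<and> restr a b (optl (snd (bump le x r))) = []) \<or>
   (restr a b r \<noteq> [] \<and> restr a b (fst (bump le x r)) = tl (restr a b r) \<and> restr a b (optl (snd (bump le x r))) = [hd (restr a b r)])"
proof (induction r)
  case Nil then show ?case by (simp add: optl_def)
next
  case (Cons y ys)
  show ?case
  proof (cases "cnd le x y")
    case True
    then show ?thesis using Cons.prems by (auto simp: bump_Cons_fst bump_Cons_snd optl_def)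
  next
    case False
    show ?thesis
    proof (cases "y = a \<or> y = b")
      case True
      have "lt le b x"
      proof (rule ccontr)
        assume "\<not> lt le b x"
        then have "lt le x a" using trich Cons.prems by blast
        then show False using cond_low[of x] Cons.prems True False by auto
      qed
      then have "\<not> cnd le x a \<and> \<not> cnd le x b" using cond_high Cons.prems by blast
      then have "restr a b (fst (bump le x ys)) = restr a b ys \<and> restr a b (optl (snd (bump le x ys))) = []"
        using no_bump Cons.prems by blast
      then show ?thesis using True False by (auto simp: bump_Cons_fst bump_Cons_snd)
    next
      case False2: False
      then show ?thesis using Cons False by (simp add: bump_Cons_fst bump_Cons_snd)
    qed
  qed
qed

lemma bump_b: "good le a b r \<Longrightarrow> set r \<subseteq> A \<Longrightarrow>
   restr a b (fst (bump le b r)) = restr a b r @ [b] \<and> restr a b (optl (snd (bump le b r))) = []"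
proof (induction r)
  case Nil then show ?case by (simp add: optl_def)
next
  case (Cons y ys)
  show ?case
  proof (cases "cnd le b y")
    case True
    then have "lt le b y" by (simp add: cond_b)
    then have "y \<noteq> a" "y \<noteq> b" "a \<notin> set ys" "b \<notin> set ys" using nba irr Cons.prems by auto
    then show ?thesis using True anb by (simp add: bump_Cons_fst bump_Cons_snd optl_def restr_none)
  next
    case False
    then show ?thesis using Cons by (simp add: bump_Cons_fst bump_Cons_snd)
  qed
qed

lemma bump_a: "good le a b r \<Longrightarrow> set r \<subseteq> A \<Longrightarrow>
   cnt a (fst (bump le a r)) = cnt a r + 1 \<and>
   cnt b (fst (bump le a r)) = cnt b r - (if b \<in> set r then 1 else 0) \<and>
   restr a b (optl (snd (bump le a r))) = (if b \<in> set r then [b] else [])"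
proof (induction r)
  case Nil then show ?case using anb by (simp add: optl_def cnt_Cons)
next
  case (Cons y ys)
  show ?case
  proof (cases "cnd le a y")
    case True
    then have lay: "lt le a y" by (simp add: cond_a)
    show ?thesis
    proof (cases "y = b")
      case True
      then show ?thesis using lay anb by (simp add: bump_Cons_fst bump_Cons_snd optl_def cnt_Cons cond_a)
    next
      case False
      then have "lt le b y" using adj lay Cons.prems by (metis lt_def total bA list.set_intros(1) subsetD)
      then have "y \<noteq> a" "a \<notin> set ys" "b \<notin> set ys" using irr lay Cons.prems by auto
      then have "cnt a ys = 0" "cnt b ys = 0" by (auto simp: cnt_def filter_empty_conv)
      then show ?thesis using lay False \<open>y \<noteq> a\<close> \<open>b \<notin> set ys\<close> anb
        by (simp add: bump_Cons_fst bump_Cons_snd optl_def cnt_Cons cond_a)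
    qed
  next
    case False
    then have "y \<noteq> b" using ab by (auto simp: cond_a)
    then show ?thesis using Cons False by (auto simp: bump_Cons_fst bump_Cons_snd cnt_Cons)
  qed
qed

lemma good_shape: "good le a b r \<Longrightarrow> \<exists>i j. restr a b r = replicate i a @ replicate j b"
proof (induction r)
  case Nil then show ?case by simp
next
  case (Cons c r)
  then obtain i j where ij: "restr a b r = replicate i a @ replicate j b" by auto
  show ?case
  proof (cases "c = a")
    case True then show ?thesis using ij by (metis restr_simps(3) replicate_Suc append_Cons)
  next
    case ca: False
    show ?thesis
    proof (cases "c = b")
      case True
      then have "a \<notin> set r" using Cons.prems by simp
      then have "a \<notin> set (restr a b r)" by (simp add: restr_def)
      then have "i = 0" using ij by (cases i) auto
      then show ?thesis using ij True by (metis restr_simps(3) replicate_Suc append_Nil replicate_0)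
    next
      case False then show ?thesis using ij ca by auto
    qed
  qed
qed

lemma cnt_rep: "cnt a (replicate i a @ replicate j b) = int i" "cnt b (replicate i a @ replicate j b) = int j"
  using anb by (simp_all add: cnt_def filter_replicate)

lemma cnt_restr: "cnt a (restr a b l) = cnt a l" "cnt b (restr a b l) = cnt b l"
  by (simp_all add: cnt_def restr_def) (metis (mono_tags) filter_filter)+

definition W where "W B i j = max 0 (rho a b B - int i) + int j"

lemma rho_repa: "rho a b (B @ replicate i a) = max 0 (rho a b B - int i)"
proof (induction i)
  case 0 then show ?case using rho_ge0[of a b B] by simp
next
  case (Suc i)
  have "B @ replicate (Suc i) a = (B @ replicate i a) @ [a]"
    by (simp add: replicate_append_same[symmetric])
  then show ?case using Suc anb rho_snoc[of a b "B @ replicate i a" a] by (simp only:) (simp add: cnt_Cons)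
qed

lemma rho_repb: "rho a b (B @ replicate j b) = rho a b B + int j"
proof (induction j)
  case 0 then show ?case by simp
next
  case (Suc j)
  have "B @ replicate (Suc j) b = (B @ replicate j b) @ [b]"
    by (simp add: replicate_append_same[symmetric])
  then show ?case using Suc anb rho_ge0[of a b B] rho_snoc[of a b "B @ replicate j b" b] by (simp only:) (simp add: cnt_Cons)
qed

lemma rho_W: "rho a b (B @ replicate i a @ replicate j b) = W B i j"
  using rho_repa[of B i] rho_repb[of "B @ replicate i a" j] unfolding W_def by simp

lemma rho_a: "rho a b (B @ [a]) = max 0 (rho a b B - 1)"
  using anb by (simp add: rho_snoc cnt_Cons)
lemma rho_b: "rho a b (B @ [b]) = rho a b B + 1"
  using anb rho_ge0[of a b B] by (simp add: rho_snoc cnt_Cons)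

lemma b_in: "restr a b r = replicate i a @ replicate j b \<Longrightarrow> b \<in> set r \<longleftrightarrow> j > 0"
proof -
  assume h: "restr a b r = replicate i a @ replicate j b"
  have "b \<in> set r \<longleftrightarrow> b \<in> set (restr a b r)" by (simp add: restr_def)
  then show ?thesis using h anb by (cases j) auto
qed

lemma step: "x \<in> A \<Longrightarrow> good le a b r \<Longrightarrow> set r \<subseteq> A \<Longrightarrow> rho a b (B @ restr a b r) \<le> rho a b u \<Longrightarrow>
  rho a b (B @ restr a b (optl (snd (bump le x r))) @ restr a b (fst (bump le x r))) \<le> rho a b (u @ restr a b [x])"
proof -
  assume x: "x \<in> A" and g: "good le a b r" and sr: "set r \<subseteq> A" and H0: "rho a b (B @ restr a b r) \<le> rho a b u"
  obtain i j where ij: "restr a b r = replicate i a @ replicate j b" using good_shape g by blast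
  have H: "W B i j \<le> rho a b u" using H0 ij rho_W by simp
  have rB: "0 \<le> rho a b B" by (rule rho_ge0)
  have ru: "0 \<le> rho a b u" by (rule rho_ge0)
  have g': "good le a b (fst (bump le x r))" using good_bump g sr x by blast
  obtain i' j' where ij': "restr a b (fst (bump le x r)) = replicate i' a @ replicate j' b" using good_shape g' by blast
  show ?thesis
  proof (cases "x = a")
    case xa: True
    have c: "cnt a (fst (bump le a r)) = cnt a r + 1 \<and>
      cnt b (fst (bump le a r)) = cnt b r - (if b \<in> set r then 1 else 0) \<and>
      restr a b (optl (snd (bump le a r))) = (if b \<in> set r then [b] else [])" using bump_a g sr by blast
    have ci: "cnt a r = int i" "cnt b r = int j" using ij cnt_restr cnt_rep by metis+
    have ci': "cnt a (fst (bump le x r)) = int i'" "cnt b (fst (bump le x r)) = int j'" using ij' cnt_restr cnt_rep by metis+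
    have bj: "b \<in> set r \<longleftrightarrow> j > 0" using b_in ij by blast
    have ru': "rho a b (u @ restr a b [x]) = max 0 (rho a b u - 1)" using xa rho_a by simp
    show ?thesis
    proof (cases "j > 0")
      case True
      then have "int i' = int i + 1" "int j' = int j - 1" "restr a b (optl (snd (bump le x r))) = [b]"
        using c ci ci' bj xa by auto
      then have "rho a b (B @ restr a b (optl (snd (bump le x r))) @ restr a b (fst (bump le x r))) = W (B @ [b]) i' j'"
        using ij' rho_W[of "B @ [b]" i' j'] by simp
      also have "\<dots> = max 0 (rho a b B + 1 - int i') + int j'" by (simp add: W_def rho_b)
      finally show ?thesis using ru' H \<open>int i' = int i + 1\<close> \<open>int j' = int j - 1\<close> unfolding W_def by linarith
    next
      case False
      then have "int i' = int i + 1" "int j' = int j" "restr a b (optl (snd (bump le x r))) = []"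
        using c ci ci' bj xa by auto
      then have "rho a b (B @ restr a b (optl (snd (bump le x r))) @ restr a b (fst (bump le x r))) = W B i' j'"
        using ij' rho_W[of B i' j'] by simp
      moreover have "j = 0" using False by simp
      ultimately show ?thesis using ru' H \<open>int i' = int i + 1\<close> \<open>int j' = int j\<close> unfolding W_def
        by (simp add: max_def split: if_splits)
    qed
  next
    case xna: False
    show ?thesis
    proof (cases "x = b")
      case True
      have "restr a b (fst (bump le b r)) = restr a b r @ [b] \<and> restr a b (optl (snd (bump le b r))) = []"
        using bump_b g sr by blast
      then have "rho a b (B @ restr a b (optl (snd (bump le x r))) @ restr a b (fst (bump le x r)))
          = rho a b ((B @ replicate i a @ replicate j b) @ [b])" using True ij by simp
      also have "\<dots> = W B i j + 1" using rho_b[of "B @ replicate i a @ replicate j b"] rho_W[of B i j] by simp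
      finally show ?thesis using True H rho_b[of u] by simp
    next
      case xnb: False
      have rx: "restr a b [x] = []" using xna xnb by simp
      from bump_other[OF x xna xnb, of r]
      show ?thesis
      proof
        assume "restr a b (fst (bump le x r)) = restr a b r \<and> restr a b (optl (snd (bump le x r))) = []"
        then show ?thesis using H0 rx by simp
      next
        assume alt: "restr a b r \<noteq> [] \<and> restr a b (fst (bump le x r)) = tl (restr a b r) \<and>
          restr a b (optl (snd (bump le x r))) = [hd (restr a b r)]"
        show ?thesis
        proof (cases i)
          case (Suc k)
          then have e: "restr a b (fst (bump le x r)) = replicate k a @ replicate j b"
            "restr a b (optl (snd (bump le x r))) = [a]" using alt ij by auto
          then have "rho a b (B @ restr a b (optl (snd (bump le x r))) @ restr a b (fst (bump le x r))) = W (B @ [a]) k j"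
            using rho_W[of "B @ [a]" k j] by simp
          also have "\<dots> = max 0 (max 0 (rho a b B - 1) - int k) + int j" by (simp add: W_def rho_a)
          finally show ?thesis using H rx Suc unfolding W_def by simp
        next
          case 0
          then obtain k where jk: "j = Suc k" using alt ij by (cases j) auto
          then have e: "restr a b (fst (bump le x r)) = replicate 0 a @ replicate k b"
            "restr a b (optl (snd (bump le x r))) = [b]" using alt ij 0 by auto
          then have "rho a b (B @ restr a b (optl (snd (bump le x r))) @ restr a b (fst (bump le x r))) = W (B @ [b]) 0 k"
            using rho_W[of "B @ [b]" 0 k] by simp
          also have "\<dots> = rho a b B + 1 + int k" using rB by (simp add: W_def rho_b)
          finally show ?thesis using H rx 0 jk rB unfolding W_def by simp
        qed
      qed
    qed
  qed
qed

lemma main: "set w \<subseteq> A \<Longrightarrow> good le a b r \<Longrightarrow> set r \<subseteq> A \<Longrightarrow> rho a b (B @ restr a b r) \<le> rho a b u \<Longrightarrow>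
  rho a b (B @ restr a b (rb le w r) @ restr a b (fold (rowins le) w r)) \<le> rho a b (u @ restr a b w)"
proof (induction w arbitrary: r B u)
  case Nil then show ?case by simp
next
  case (Cons x xs)
  let ?r = "fst (bump le x r)"
  have s: "rho a b ((B @ restr a b (optl (snd (bump le x r)))) @ restr a b ?r) \<le> rho a b (u @ restr a b [x])"
    using step[of x r B u] Cons.prems by simp
  have "rho a b ((B @ restr a b (optl (snd (bump le x r)))) @ restr a b (rb le xs ?r) @ restr a b (fold (rowins le) xs ?r))
     \<le> rho a b ((u @ restr a b [x]) @ restr a b xs)"
  proof -
    have x: "x \<in> A" and xs: "set xs \<subseteq> A" using Cons.prems by auto
    have g': "good le a b ?r" using good_bump Cons.prems x by blast
    have s': "set ?r \<subseteq> A" using set_bump[of le x r] Cons.prems x by blast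
    show ?thesis using Cons.IH[OF xs g' s' s] by (simp only: append_assoc)
  qed
  moreover have "u @ restr a b (x # xs) = (u @ restr a b [x]) @ restr a b xs" by (simp add: restr_def)
  ultimately show ?case by (simp del: restr_simps(3) add: rowins_def[of le x r])
qed

end

theorem lemma5:
  fixes Gs :: "real set" and le :: "letter \<Rightarrow> letter \<Rightarrow> bool"
    and a b :: letter and w :: "letter list"
  assumes "admissible Gs le"
    and "is_LE a" and "is_LE b"
    and "lt le a b"
    and "\<forall>c\<in>alph Gs. \<not> (lt le a c \<and> lt le c b)"
    and "set w \<subseteq> alph Gs"
  shows "rho a b (dw le a b w) \<le> rho a b (restr a b w)"
proof -
  have aA: "a \<in> alph Gs" "b \<in> alph Gs" using assms(2,3) by (auto simp: is_LE_def alph_def)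
  interpret ab "alph Gs" le a b
    using assms aA by unfold_locales (auto simp: admissible_def)
  have "rho a b ([] @ restr a b (rb le w []) @ restr a b (fold (rowins le) w [])) \<le> rho a b ([] @ restr a b w)"
    by (rule main) (use assms in auto)
  moreover have "dw le a b w = restr a b (rb le w []) @ restr a b (fold (rowins le) w [])"
    unfolding dw_def rsk_def frb frfold by (simp add: first_row_def)
  ultimately show ?thesis by simp
qed

end
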